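(* Let $d\ge 2$ be an integer and $\mathcal{T}=[t_{i_1,\ldots,i_d}]\in\mathrm{Sym}(2,d)\setminus\{0\}$. Assume that $\mathcal{T}$ has a best rank one approximation which is not symmetric. Then for each $i_3,\ldots,i_d\in\{1,2\}$ the $2\times 2$ symmetric matrix $[t_{i,j,i_3,\ldots,i_d}]_{i,j=1}^2$ has trace zero.
   Context: $\mathrm{Sym}(2,d)$ is the space of real tensors $[t_{i_1,\ldots,i_d}]_{i_1,\ldots,i_d=1}^2$ invariant under all permutations of indices. Norm $\|\mathcal{T}\|=\sqrt{\sum t_{i_1,\ldots,i_d}^2}$; $\mathrm{S}^1$ is the unit circle in $\mathbb{R}^2$. A best rank one approximation of $\mathcal{T}$ is a tensor $a\,\mathbf{x}_1\otimes\cdots\otimes\mathbf{x}_d$ ($a\in\mathbb{R}$, $\mathbf{x}_j\in\mathrm{S}^1$) minimizing $\|\mathcal{T}-s\,\mathbf{y}_1\otimes\cdots\otimes\mathbf{y}_d\|$ over $s\in\mathbb{R}$, $\mathbf{y}_j\in\mathrm{S}^1$; it is symmetric if it is a symmetric tensor. *)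

theory Defs
  imports Complex_Main "HOL-Library.Multiset"
begin

text \<open>Tensors in (R^2)^{\<otimes> d}: real-valued functions on index lists of length d with
  entries in {1,2}. Only values on idx d matter.\<close>

definition idx :: "nat \<Rightarrow> nat list set" where
  "idx d = {is. length is = d \<and> set is \<subseteq> {1,2}}"

definition sym_tensor :: "nat \<Rightarrow> (nat list \<Rightarrow> real) \<Rightarrow> bool" where
  "sym_tensor d T \<longleftrightarrow> (\<forall>is\<in>idx d. \<forall>js. mset js = mset is \<longrightarrow> T js = T is)"

definition tnorm :: "nat \<Rightarrow> (nat list \<Rightarrow> real) \<Rightarrow> real" where
  "tnorm d T = sqrt (\<Sum>is\<in>idx d. (T is)\<^sup>2)"

definition on_S1 :: "(nat \<Rightarrow> real) \<Rightarrow> bool" where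
  "on_S1 v \<longleftrightarrow> (v 1)\<^sup>2 + (v 2)\<^sup>2 = 1"

text \<open>The rank one tensor a x_1 \<otimes> ... \<otimes> x_d (vectors indexed 0..d-1).\<close>
definition rank_one :: "nat \<Rightarrow> real \<Rightarrow> (nat \<Rightarrow> nat \<Rightarrow> real) \<Rightarrow> nat list \<Rightarrow> real" where
  "rank_one d a x = (\<lambda>is. a * (\<Prod>k<d. x k (is ! k)))"

definition best_rank_one_approx ::
  "nat \<Rightarrow> (nat list \<Rightarrow> real) \<Rightarrow> real \<Rightarrow> (nat \<Rightarrow> nat \<Rightarrow> real) \<Rightarrow> bool" where
  "best_rank_one_approx d T a x \<longleftrightarrow>
     (\<forall>k<d. on_S1 (x k)) \<and>
     (\<forall>s y. (\<forall>k<d. on_S1 (y k)) \<longrightarrow>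
        tnorm d (\<lambda>is. T is - rank_one d a x is) \<le> tnorm d (\<lambda>is. T is - rank_one d s y is))"

end

theory Submission
  imports Defs "HOL-Combinatorics.Permutations"
begin

definition vec2 :: "real \<Rightarrow> real \<Rightarrow> nat \<Rightarrow> real" where
  "vec2 a b = (\<lambda>i. if i = 1 then a else b)"
lemma vec2_simps[simp]: "vec2 a b 1 = a" "vec2 a b 2 = b" "vec2 a b (Suc 0) = a" by (auto simp: vec2_def)

definition cross :: "(nat \<Rightarrow> real) \<Rightarrow> (nat \<Rightarrow> real) \<Rightarrow> real" where
  "cross u v = u 1 * v 2 - u 2 * v 1"

definition bil :: "real \<Rightarrow> real \<Rightarrow> real \<Rightarrow> (nat \<Rightarrow> real) \<Rightarrow> (nat \<Rightarrow> real) \<Rightarrow> real" where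
  "bil p m r u v = u 1 * v 1 * p + (u 1 * v 2 + u 2 * v 1) * m + u 2 * v 2 * r"

lemma CSeq:
  assumes bnd: "\<forall>u. on_S1 u \<longrightarrow> \<bar>u 1 * w1 + u 2 * w2\<bar> \<le> \<sigma>"
    and u0: "on_S1 u0" and val: "u0 1 * w1 + u0 2 * w2 = s" and sig: "\<sigma> \<le> \<bar>s\<bar>"
  shows "w1 = s * u0 1 \<and> w2 = s * u0 2"
proof -
  have nb: "w1\<^sup>2 + w2\<^sup>2 \<le> s\<^sup>2"
  proof (cases "w1\<^sup>2 + w2\<^sup>2 = 0")
    case True then show ?thesis by simp
  next
    case False
    define n where "n = sqrt (w1\<^sup>2 + w2\<^sup>2)"
    have npos: "n > 0" using False n_def
      by (metis add_nonneg_nonneg real_sqrt_gt_0_iff zero_le_power2 order_le_less)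
    have n2: "n\<^sup>2 = w1\<^sup>2 + w2\<^sup>2" unfolding n_def by simp
    have un: "on_S1 (vec2 (w1/n) (w2/n))"
      unfolding on_S1_def using npos n2 False by (simp add: power_divide add_divide_distrib[symmetric])
    have "(w1/n) * w1 + (w2/n) * w2 = n"
      using npos n2 by (simp add: field_simps power2_eq_square)
    then have "n \<le> \<sigma>" using bnd un by (metis vec2_simps abs_of_pos npos)
    then have "n \<le> \<bar>s\<bar>" using sig by simp
    then have "n\<^sup>2 \<le> \<bar>s\<bar>\<^sup>2" using npos by (intro power_mono) auto
    then show ?thesis using n2 by simp
  qed
  have "(w1 - s * u0 1)\<^sup>2 + (w2 - s * u0 2)\<^sup>2 = (w1\<^sup>2 + w2\<^sup>2) - 2*s*(u0 1 * w1 + u0 2 * w2) + s\<^sup>2 * ((u0 1)\<^sup>2 + (u0 2)\<^sup>2)"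
    by (simp add: power2_eq_square algebra_simps)
  also have "\<dots> = (w1\<^sup>2 + w2\<^sup>2) - s\<^sup>2" using val u0 unfolding on_S1_def by (simp add: power2_eq_square)
  finally have "(w1 - s * u0 1)\<^sup>2 + (w2 - s * u0 2)\<^sup>2 \<le> 0" using nb by simp
  then show ?thesis
    by (smt (verit) zero_le_power2 power_eq_0_iff)
qed

lemma eig_det:
  assumes "(p - l) * w1 + m * w2 = 0" "m * w1 + (r - l) * w2 = 0" "w1 \<noteq> 0 \<or> w2 \<noteq> 0"
  shows "(p - l) * (r - l) = (m::real)\<^sup>2"
proof -
  have a: "((p - l) * (r - l) - m\<^sup>2) * w1 = (r - l) * ((p - l) * w1 + m * w2) - m * (m * w1 + (r - l) * w2)"
    by (simp add: power2_eq_square algebra_simps)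
  have b: "((p - l) * (r - l) - m\<^sup>2) * w2 = (p - l) * (m * w1 + (r - l) * w2) - m * ((p - l) * w1 + m * w2)"
    by (simp add: power2_eq_square algebra_simps)
  show ?thesis using a b assms by auto
qed

lemma pairP:
  assumes bnd: "\<forall>u v. on_S1 u \<longrightarrow> on_S1 v \<longrightarrow> \<bar>bil p m r u v\<bar> \<le> \<sigma>"
    and u0: "on_S1 u0" and v0: "on_S1 v0" and cr: "cross u0 v0 \<noteq> 0"
    and val: "bil p m r u0 v0 = s" and sig: "\<sigma> \<le> \<bar>s\<bar>" and s0: "s \<noteq> 0"
  shows "p + r = 0 \<and> p\<^sup>2 + m\<^sup>2 = s\<^sup>2"
proof -
  have e1: "p * v0 1 + m * v0 2 = s * u0 1 \<and> m * v0 1 + r * v0 2 = s * u0 2"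
  proof (rule CSeq[OF _ u0 _ sig])
    show "\<forall>u. on_S1 u \<longrightarrow> \<bar>u 1 * (p * v0 1 + m * v0 2) + u 2 * (m * v0 1 + r * v0 2)\<bar> \<le> \<sigma>"
      using bnd v0 by (auto simp: bil_def algebra_simps)
    show "u0 1 * (p * v0 1 + m * v0 2) + u0 2 * (m * v0 1 + r * v0 2) = s"
      using val by (auto simp: bil_def algebra_simps)
  qed
  have e2: "p * u0 1 + m * u0 2 = s * v0 1 \<and> m * u0 1 + r * u0 2 = s * v0 2"
  proof (rule CSeq[OF _ v0 _ sig])
    show "\<forall>u. on_S1 u \<longrightarrow> \<bar>u 1 * (p * u0 1 + m * u0 2) + u 2 * (m * u0 1 + r * u0 2)\<bar> \<le> \<sigma>"
      using bnd u0 by (auto simp: bil_def algebra_simps)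
    show "v0 1 * (p * u0 1 + m * u0 2) + v0 2 * (m * u0 1 + r * u0 2) = s"
      using val by (auto simp: bil_def algebra_simps)
  qed
  have nz1: "u0 1 + v0 1 \<noteq> 0 \<or> u0 2 + v0 2 \<noteq> 0"
  proof (rule ccontr)
    assume "\<not> ?thesis"
    then have "v0 1 = - u0 1" "v0 2 = - u0 2" by auto
    then show False using cr by (simp add: cross_def algebra_simps)
  qed
  have nz2: "u0 1 - v0 1 \<noteq> 0 \<or> u0 2 - v0 2 \<noteq> 0"
  proof (rule ccontr)
    assume "\<not> ?thesis"
    then have "v0 1 = u0 1" "v0 2 = u0 2" by auto
    then show False using cr by (simp add: cross_def algebra_simps)
  qed
  have d1: "(p - s) * (r - s) = m\<^sup>2"
    by (rule eig_det[OF _ _ nz1]) (use e1 e2 in \<open>simp add: algebra_simps\<close>)+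
  have d2: "(p - (-s)) * (r - (-s)) = m\<^sup>2"
    by (rule eig_det[OF _ _ nz2]) (use e1 e2 in \<open>simp add: algebra_simps\<close>)+
  have "2 * s * (p + r) = 0" using d1 d2 by (simp add: algebra_simps)
  then have pr: "p + r = 0" using s0 by simp
  then have rp: "r = -p" by simp
  show ?thesis using d1 pr unfolding rp by (simp add: algebra_simps power2_eq_square)
qed

lemma pairQ:
  assumes "r = -p" "p\<^sup>2 + m\<^sup>2 = s\<^sup>2" "s \<noteq> 0"
  shows "\<exists>u v. on_S1 u \<and> on_S1 v \<and> cross u v \<noteq> 0 \<and> bil p m r u v = s"
proof (cases "m = 0")
  case False
  show ?thesis
  proof (intro exI conjI)
    show "on_S1 (vec2 1 0)" by (simp add: on_S1_def)
    show "on_S1 (vec2 (p/s) (m/s))" using assms(2,3)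
      by (simp add: on_S1_def power_divide add_divide_distrib[symmetric])
    show "cross (vec2 1 0) (vec2 (p/s) (m/s)) \<noteq> 0" using False assms(3) by (simp add: cross_def)
    show "bil p m r (vec2 1 0) (vec2 (p/s) (m/s)) = s" using assms
      by (simp add: bil_def field_simps power2_eq_square)
  qed
next
  case True
  define h where "h = 1 / sqrt 2"
  have h2: "h * h = 1/2" unfolding h_def by (simp add: real_sqrt_mult[symmetric] flip: divide_inverse)
  have hp: "h \<noteq> 0" unfolding h_def by simp
  have pp: "p * p = s * s" using assms(2) True by (simp add: power2_eq_square)
  have p0: "p \<noteq> 0" using pp assms(3) by auto
  show ?thesis
  proof (intro exI conjI)
    show "on_S1 (vec2 h h)" using h2 by (simp add: on_S1_def power2_eq_square)
    show "on_S1 (vec2 (p*h/s) (-p*h/s))" using h2 pp assms(3)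
      by (simp add: on_S1_def power2_eq_square field_simps)
    show "cross (vec2 h h) (vec2 (p*h/s) (-p*h/s)) \<noteq> 0" using hp p0 assms(3)
      by (simp add: cross_def field_simps)
    have "bil p m r (vec2 h h) (vec2 (p*h/s) (-p*h/s)) = 2 * (h*h) * (p*p) / s"
      using True assms(1) by (simp add: bil_def field_simps)
    also have "\<dots> = s" using h2 pp assms(3) by (simp add: field_simps)
    finally show "bil p m r (vec2 h h) (vec2 (p*h/s) (-p*h/s)) = s" .
  qed
qed

definition tri :: "real \<Rightarrow> real \<Rightarrow> real \<Rightarrow> real \<Rightarrow> (nat \<Rightarrow> real) \<Rightarrow> (nat \<Rightarrow> real) \<Rightarrow> (nat \<Rightarrow> real) \<Rightarrow> real" where
  "tri s0 s1 s2 s3 a b c = a 1 * b 1 * c 1 * s0 + (a 1 * b 1 * c 2 + a 1 * b 2 * c 1 + a 2 * b 1 * c 1) * s1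
     + (a 1 * b 2 * c 2 + a 2 * b 1 * c 2 + a 2 * b 2 * c 1) * s2 + a 2 * b 2 * c 2 * s3"

lemma tri_c: "tri s0 s1 s2 s3 a b c = bil (c 1 * s0 + c 2 * s1) (c 1 * s1 + c 2 * s2) (c 1 * s2 + c 2 * s3) a b"
  by (simp add: tri_def bil_def algebra_simps)
lemma tri_b: "tri s0 s1 s2 s3 a b c = bil (b 1 * s0 + b 2 * s1) (b 1 * s1 + b 2 * s2) (b 1 * s2 + b 2 * s3) a c"
  by (simp add: tri_def bil_def algebra_simps)

lemma cross_par:
  assumes "cross a c = 0" "cross b c = 0" "on_S1 c"
  shows "cross a b = 0"
proof -
  have "c 2 * cross a b = 0" using assms(1,2) unfolding cross_def
    by (smt (verit, ccfv_SIG) mult.commute mult.left_commute right_diff_distrib)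
  moreover have "c 1 * cross a b = 0" using assms(1,2) unfolding cross_def
    by (smt (verit, ccfv_SIG) mult.commute mult.left_commute right_diff_distrib)
  moreover have "c 1 \<noteq> 0 \<or> c 2 \<noteq> 0" using assms(3) unfolding on_S1_def by auto
  ultimately show ?thesis by auto
qed

lemma triS:
  assumes bnd: "\<forall>a b c. on_S1 a \<longrightarrow> on_S1 b \<longrightarrow> on_S1 c \<longrightarrow> \<bar>tri s0 s1 s2 s3 a b c\<bar> \<le> \<bar>s\<bar>"
    and u0: "on_S1 u0" and v0: "on_S1 v0" and c0: "on_S1 c0" and cr: "cross u0 v0 \<noteq> 0"
    and val: "tri s0 s1 s2 s3 u0 v0 c0 = s" and sn: "s \<noteq> 0" and w: "on_S1 w"
  shows "\<exists>u v. on_S1 u \<and> on_S1 v \<and> cross u v \<noteq> 0 \<and> tri s0 s1 s2 s3 u v w = s"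
proof -
  define p where "p = c0 1 * s0 + c0 2 * s1"
  define m where "m = c0 1 * s1 + c0 2 * s2"
  define r where "r = c0 1 * s2 + c0 2 * s3"
  have P1: "p + r = 0 \<and> p\<^sup>2 + m\<^sup>2 = s\<^sup>2"
  proof (rule pairP[OF _ u0 v0 cr _ order_refl sn])
    show "\<forall>u v. on_S1 u \<longrightarrow> on_S1 v \<longrightarrow> \<bar>bil p m r u v\<bar> \<le> \<bar>s\<bar>"
      using bnd c0 unfolding p_def m_def r_def by (metis tri_c)
    show "bil p m r u0 v0 = s" using val unfolding p_def m_def r_def by (simp add: tri_c)
  qed
  have rp: "r = -p" using P1 by simp
  have pm: "p\<^sup>2 + m\<^sup>2 = s\<^sup>2" using P1 by simp
  define R where "R v = vec2 ((p * v 1 + m * v 2)/s) ((m * v 1 - p * v 2)/s)" for v :: "nat \<Rightarrow> real"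
  have Ru: "on_S1 (R v)" if "on_S1 v" for v
  proof -
    have "(p * v 1 + m * v 2)\<^sup>2 + (m * v 1 - p * v 2)\<^sup>2 = (p\<^sup>2 + m\<^sup>2) * ((v 1)\<^sup>2 + (v 2)\<^sup>2)"
      by (simp add: power2_eq_square algebra_simps)
    also have "\<dots> = s\<^sup>2" using pm that unfolding on_S1_def by simp
    finally show ?thesis unfolding R_def on_S1_def using sn
      by (simp add: power_divide add_divide_distrib[symmetric])
  qed
  have Rval: "tri s0 s1 s2 s3 (R v) v c0 = s" if "on_S1 v" for v
  proof -
    have "tri s0 s1 s2 s3 (R v) v c0 = bil p m r (R v) v" unfolding p_def m_def r_def by (simp add: tri_c)
    also have "\<dots> = ((p * v 1 + m * v 2)\<^sup>2 + (m * v 1 - p * v 2)\<^sup>2) / s"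
      unfolding R_def bil_def rp using sn by (simp add: power2_eq_square field_simps)
    also have "(p * v 1 + m * v 2)\<^sup>2 + (m * v 1 - p * v 2)\<^sup>2 = (p\<^sup>2 + m\<^sup>2) * ((v 1)\<^sup>2 + (v 2)\<^sup>2)"
      by (simp add: power2_eq_square algebra_simps)
    also have "\<dots> = s\<^sup>2" using pm that unfolding on_S1_def by simp
    finally show ?thesis using sn by (simp add: power2_eq_square)
  qed
  have Rcross: "cross (R x) (R y) = - cross x y" for x y
  proof -
    have q: "(a/s)*(b/s) - (c/s)*(e/s) = (a*b - c*e)/s\<^sup>2" for a b c e
      by (simp add: power2_eq_square diff_divide_distrib)
    have "cross (R x) (R y) = ((p * x 1 + m * x 2) * (m * y 1 - p * y 2) - (m * x 1 - p * x 2) * (p * y 1 + m * y 2)) / s\<^sup>2"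
      unfolding R_def cross_def vec2_simps by (rule q)
    also have "(p * x 1 + m * x 2) * (m * y 1 - p * y 2) - (m * x 1 - p * x 2) * (p * y 1 + m * y 2) = - ((p\<^sup>2 + m\<^sup>2) * cross x y)"
      unfolding cross_def by (simp add: power2_eq_square algebra_simps)
    also have "- ((p\<^sup>2 + m\<^sup>2) * cross x y) / s\<^sup>2 = - cross x y" using pm sn by simp
    finally show ?thesis .
  qed
  have good: "v 1 * (s0 + s2) + v 2 * (s1 + s3) = 0" if v: "on_S1 v" "cross (R v) c0 \<noteq> 0" for v
  proof -
    have "(v 1 * s0 + v 2 * s1) + (v 1 * s2 + v 2 * s3) = 0 \<and>
          (v 1 * s0 + v 2 * s1)\<^sup>2 + (v 1 * s1 + v 2 * s2)\<^sup>2 = s\<^sup>2"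
    proof (rule pairP[OF _ Ru[OF v(1)] c0 v(2) _ order_refl sn])
      show "\<forall>a c. on_S1 a \<longrightarrow> on_S1 c \<longrightarrow> \<bar>bil (v 1 * s0 + v 2 * s1) (v 1 * s1 + v 2 * s2) (v 1 * s2 + v 2 * s3) a c\<bar> \<le> \<bar>s\<bar>"
        using bnd v(1) by (metis tri_b)
      show "bil (v 1 * s0 + v 2 * s1) (v 1 * s1 + v 2 * s2) (v 1 * s2 + v 2 * s3) (R v) c0 = s"
        using Rval[OF v(1)] by (simp add: tri_b)
    qed
    then show ?thesis by (simp add: algebra_simps)
  qed
  have notboth: "cross x y = 0" if "cross (R x) c0 = 0" "cross (R y) c0 = 0" for x y
    using cross_par[OF that c0] Rcross by simp
  define h where "h = 1 / sqrt 2"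
  have h2: "h * h = 1/2" unfolding h_def by (simp add: real_sqrt_mult[symmetric] flip: divide_inverse)
  have hp: "h \<noteq> 0" unfolding h_def by simp
  have U: "on_S1 (vec2 1 0)" "on_S1 (vec2 0 1)" "on_S1 (vec2 h h)" "on_S1 (vec2 h (-h))"
    using h2 by (auto simp: on_S1_def power2_eq_square)
  have C: "cross (vec2 1 0) (vec2 h h) \<noteq> 0" "cross (vec2 1 0) (vec2 h (-h)) \<noteq> 0"
     "cross (vec2 0 1) (vec2 h h) \<noteq> 0" "cross (vec2 0 1) (vec2 h (-h)) \<noteq> 0"
    using hp by (auto simp: cross_def)
  have tau: "s0 + s2 = 0 \<and> s1 + s3 = 0"
  proof (cases "cross (R (vec2 1 0)) c0 \<noteq> 0 \<and> cross (R (vec2 0 1)) c0 \<noteq> 0")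
    case True
    then show ?thesis using good[OF U(1)] good[OF U(2)] by simp
  next
    case False
    then have g3: "cross (R (vec2 h h)) c0 \<noteq> 0" and g4: "cross (R (vec2 h (-h))) c0 \<noteq> 0"
      using notboth C by blast+
    have "h * ((s0 + s2) + (s1 + s3)) = 0" using good[OF U(3) g3] by (simp add: algebra_simps)
    moreover have "h * ((s0 + s2) - (s1 + s3)) = 0" using good[OF U(4) g4] by (simp add: algebra_simps)
    ultimately show ?thesis using hp by simp
  qed
  have s01: "s0\<^sup>2 + s1\<^sup>2 = s\<^sup>2"
  proof -
    have s2: "s2 = -s0" using tau by simp
    have "p\<^sup>2 + m\<^sup>2 = (s0\<^sup>2 + s1\<^sup>2) * ((c0 1)\<^sup>2 + (c0 2)\<^sup>2)"
      unfolding p_def m_def s2 by (simp add: power2_eq_square algebra_simps)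
    then show ?thesis using pm c0 unfolding on_S1_def by simp
  qed
  define p' where "p' = w 1 * s0 + w 2 * s1"
  define m' where "m' = w 1 * s1 + w 2 * s2"
  define r' where "r' = w 1 * s2 + w 2 * s3"
  have "r' = -p'" 
  proof -
    have s23: "s2 = -s0" "s3 = -s1" using tau by auto
    show ?thesis unfolding r'_def p'_def s23 by (simp add: algebra_simps)
  qed
  moreover have "p'\<^sup>2 + m'\<^sup>2 = s\<^sup>2"
  proof -
    have s2: "s2 = -s0" using tau by simp
    have "p'\<^sup>2 + m'\<^sup>2 = (s0\<^sup>2 + s1\<^sup>2) * ((w 1)\<^sup>2 + (w 2)\<^sup>2)"
      unfolding p'_def m'_def s2 by (simp add: power2_eq_square algebra_simps)
    then show ?thesis using s01 w unfolding on_S1_def by simp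
  qed
  ultimately obtain u v where "on_S1 u" "on_S1 v" "cross u v \<noteq> 0" "bil p' m' r' u v = s"
    using pairQ sn by blast
  then show ?thesis unfolding p'_def m'_def r'_def by (metis tri_c)
qed

definition ff :: "nat \<Rightarrow> (nat list \<Rightarrow> real) \<Rightarrow> (nat \<Rightarrow> nat \<Rightarrow> real) \<Rightarrow> real" where
  "ff d T x = (\<Sum>ks\<in>idx d. T ks * (\<Prod>k<d. x k (ks!k)))"

definition ee :: "nat \<Rightarrow> nat \<Rightarrow> real" where "ee a = (\<lambda>t. if t = a then 1 else 0)"

lemma idx_0: "idx 0 = {[]}" by (auto simp: idx_def)

lemma idx_Suc: "idx (Suc d) = (\<lambda>(i,ks). i#ks) ` ({1,2} \<times> idx d)"
proof
  show "idx (Suc d) \<subseteq> (\<lambda>(i,ks). i#ks) ` ({1,2} \<times> idx d)"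
  proof
    fix xs assume "xs \<in> idx (Suc d)"
    then obtain i ks where "xs = i # ks" "i \<in> {1,2}" "ks \<in> idx d"
      by (cases xs) (auto simp: idx_def)
    then show "xs \<in> (\<lambda>(i,ks). i#ks) ` ({1,2} \<times> idx d)" by force
  qed
  show "(\<lambda>(i,ks). i#ks) ` ({1,2} \<times> idx d) \<subseteq> idx (Suc d)" by (auto simp: idx_def)
qed

lemma finite_idx: "finite (idx d)"
  by (induction d) (auto simp: idx_0 idx_Suc)

lemma sum_prod_idx:
  fixes g :: "nat \<Rightarrow> nat \<Rightarrow> real"
  shows "(\<Sum>ks\<in>idx d. \<Prod>k<d. g k (ks!k)) = (\<Prod>k<d. (g k 1 + g k 2))"
proof (induction d arbitrary: g)
  case 0 then show ?case by (simp add: idx_0)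
next
  case (Suc d)
  have inj: "inj_on (\<lambda>(i,ks). i#ks) ({1::nat,2} \<times> idx d)" by (auto simp: inj_on_def)
  have "(\<Sum>ks\<in>idx (Suc d). \<Prod>k<Suc d. g k (ks!k))
      = (\<Sum>(i,ks)\<in>{1,2} \<times> idx d. \<Prod>k<Suc d. g k ((i#ks)!k))"
    unfolding idx_Suc by (subst sum.reindex[OF inj]) (simp add: case_prod_beta)
  also have "\<dots> = (\<Sum>(i,ks)\<in>{1,2} \<times> idx d. g 0 i * (\<Prod>k<d. g (Suc k) (ks!k)))"
    by (simp add: prod.lessThan_Suc_shift del: prod.lessThan_Suc)
  also have "\<dots> = (\<Sum>i\<in>{1,2}. \<Sum>ks\<in>idx d. g 0 i * (\<Prod>k<d. g (Suc k) (ks!k)))"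
    by (simp add: sum.cartesian_product)
  also have "\<dots> = (\<Sum>i\<in>{1::nat,2}. g 0 i * (\<Sum>ks\<in>idx d. \<Prod>k<d. g (Suc k) (ks!k)))"
    by (rule sum.cong[OF refl]) (rule sum_distrib_left[symmetric])
  also have "\<dots> = (\<Sum>i\<in>{1::nat,2}. g 0 i * (\<Prod>k<d. (g (Suc k) 1 + g (Suc k) 2)))"
    using Suc.IH[of "\<lambda>k. g (Suc k)"] by simp
  also have "\<dots> = (\<Prod>k<Suc d. (g k 1 + g k 2))"
    by (simp add: prod.lessThan_Suc_shift algebra_simps del: prod.lessThan_Suc)
  finally show ?case .
qed

lemma idx_nth: "ks \<in> idx d \<Longrightarrow> k < d \<Longrightarrow> ks ! k \<in> {1,2}"
  unfolding idx_def by (auto dest: nth_mem)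

lemma prod_upd:
  assumes "i < d"
  shows "(\<Prod>k<d. (x(i:=v)) k (ks!k)) = v (ks!i) * (\<Prod>k\<in>{..<d}-{i}. x k (ks!k))"
  using assms by (subst prod.remove[of _ i]) (auto intro!: prod.cong)

lemma ff_lin:
  assumes "i < d"
  shows "ff d T (x(i:=u)) = u 1 * ff d T (x(i:=ee 1)) + u 2 * ff d T (x(i:=ee 2))"
proof -
  have pt: "T ks * (\<Prod>k<d. (x(i:=u)) k (ks!k)) =
     u 1 * (T ks * (\<Prod>k<d. (x(i:=ee 1)) k (ks!k))) + u 2 * (T ks * (\<Prod>k<d. (x(i:=ee 2)) k (ks!k)))"
    if "ks \<in> idx d" for "ks"
  proof -
    have "ks ! i \<in> {1,2}" using idx_nth[OF that assms] .
    then have "u (ks!i) = u 1 * ee 1 (ks!i) + u 2 * ee 2 (ks!i)" by (auto simp: ee_def)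
    then show ?thesis unfolding prod_upd[OF assms] by (simp add: algebra_simps)
  qed
  have "ff d T (x(i:=u)) = (\<Sum>ks\<in>idx d. u 1 * (T ks * (\<Prod>k<d. (x(i:=ee 1)) k (ks!k))) + u 2 * (T ks * (\<Prod>k<d. (x(i:=ee 2)) k (ks!k))))"
    unfolding ff_def by (rule sum.cong[OF refl pt])
  also have "\<dots> = u 1 * ff d T (x(i:=ee 1)) + u 2 * ff d T (x(i:=ee 2))"
    unfolding ff_def by (simp add: sum.distrib sum_distrib_left)
  finally show ?thesis .
qed

lemma ff_cong: "(\<And>k. k < d \<Longrightarrow> x k = y k) \<Longrightarrow> ff d T x = ff d T y"
  unfolding ff_def by (intro sum.cong refl arg_cong2[where f="(*)"] prod.cong) auto

lemma ff_swap:
  assumes sym: "sym_tensor d T" and ij: "i < d" "j < d"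
  shows "ff d T (x \<circ> transpose i j) = ff d T x"
proof -
  let ?p = "transpose i j"
  have pp: "?p permutes {..<d}" using ij by (intro permutes_swap_id) auto
  let ?g = "permute_list ?p"
  have gi: "?g js \<in> idx d" if "js \<in> idx d" for js
  proof -
    have l: "length js = d" using that by (simp add: idx_def)
    have "mset (?g js) = mset js" using pp l by simp
    then have "set (?g js) = set js" by (metis set_mset_mset)
    then show ?thesis using that by (simp add: idx_def)
  qed
  have gg: "?g (?g js) = js" if "js \<in> idx d" for js
  proof -
    have l: "length js = d" using that by (simp add: idx_def)
    have "?g (?g js) = permute_list (?p \<circ> ?p) js"
      using pp l by (intro permute_list_compose[symmetric]) auto
    also have "?p \<circ> ?p = id" by (simp add: fun_eq_iff)
    finally show ?thesis by simp
  qed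
  have trm: "T (?g js) * (\<Prod>k<d. x k (?g js ! k)) = T js * (\<Prod>k<d. x (?p k) (js!k))"
    if "js \<in> idx d" for js
  proof -
    have l: "length js = d" using that by (simp add: idx_def)
    have ms: "mset (?g js) = mset js" using pp l by simp
    have "T (?g js) = T js" using sym that ms unfolding sym_tensor_def by blast
    moreover have "(\<Prod>k<d. x k (?g js ! k)) = (\<Prod>k<d. x k (js ! ?p k))"
      using pp l by (intro prod.cong refl) (simp add: permute_list_nth)
    moreover have "\<dots> = (\<Prod>k<d. x (?p k) (js ! k))"
      using prod.permute[OF pp, of "\<lambda>k. x k (js ! ?p k)"] by (simp add: comp_def)
    ultimately show ?thesis by simp
  qed
  show ?thesis unfolding ff_def
    by (rule sum.reindex_bij_witness[of _ ?g ?g]) (auto simp: gi gg trm)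
qed

lemma ff_pair_sym:
  assumes "sym_tensor d T" "i < d" "j < d" "i \<noteq> j"
  shows "ff d T (x(i:=u, j:=v)) = ff d T (x(i:=v, j:=u))"
proof -
  have "x(i:=u, j:=v) \<circ> transpose i j = x(i:=v, j:=u)"
    using assms(4) by (auto simp: fun_eq_iff transpose_def)
  then show ?thesis using ff_swap[OF assms(1-3), of "x(i:=u, j:=v)"] by simp
qed

lemma ff_basis:
  assumes "ks0 \<in> idx d"
  shows "ff d T (\<lambda>k. ee (ks0!k)) = T ks0"
proof -
  have pt: "T ks * (\<Prod>k<d. ee (ks0!k) (ks!k)) = (if ks = ks0 then T ks0 else 0)" if "ks \<in> idx d" for "ks"
  proof (cases "ks = ks0")
    case True then show ?thesis by (simp add: ee_def)
  next
    case False
    have "length ks = d" "length ks0 = d" using that assms by (auto simp: idx_def)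
    then obtain k where "k < d" "ks!k \<noteq> ks0!k" using False by (metis nth_equalityI)
    then show ?thesis using False by (auto simp: ee_def intro!: prod_zero)
  qed
  have "ff d T (\<lambda>k. ee (ks0!k)) = (\<Sum>ks\<in>idx d. if ks = ks0 then T ks0 else 0)"
    unfolding ff_def by (rule sum.cong[OF refl pt])
  also have "\<dots> = T ks0" using assms finite_idx by simp
  finally show ?thesis .
qed

lemma ff2:
  assumes sym: "sym_tensor d T" and d: "1 < d"
  shows "ff d T (y(0:=u, 1:=v)) = bil (ff d T (y(0:=ee 1, 1:=ee 1))) (ff d T (y(0:=ee 1, 1:=ee 2)))
            (ff d T (y(0:=ee 2, 1:=ee 2))) u v"
proof -
  let ?G = "\<lambda>a b. ff d T (y(0:=a, 1:=b))"
  have L0: "?G a b = a 1 * ?G (ee 1) b + a 2 * ?G (ee 2) b" for a b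
  proof -
    have e: "y(0:=c, 1:=b) = (y(1:=b))(0:=c)" for c by (auto simp: fun_eq_iff)
    show ?thesis unfolding e using ff_lin[of 0 d T "y(1:=b)" a] d by simp
  qed
  have L1: "?G a b = b 1 * ?G a (ee 1) + b 2 * ?G a (ee 2)" for a b
    using ff_lin[of 1 d T "y(0:=a)" b] d by simp
  have S: "?G a b = ?G b a" for a b using ff_pair_sym[OF sym, of 0 1 y a b] d by simp
  have "?G u v = u 1 * (v 1 * ?G (ee 1) (ee 1) + v 2 * ?G (ee 1) (ee 2)) + u 2 * (v 1 * ?G (ee 2) (ee 1) + v 2 * ?G (ee 2) (ee 2))"
    using L0[of u v] L1[of "ee 1" v] L1[of "ee 2" v] by simp
  then show ?thesis using S[of "ee 2" "ee 1"] by (simp add: bil_def algebra_simps)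
qed

lemma ff3:
  assumes sym: "sym_tensor d T" and k: "2 \<le> k" "k < d"
  shows "ff d T (y(0:=a, 1:=b, k:=c)) = tri (ff d T (y(0:=ee 1, 1:=ee 1, k:=ee 1))) (ff d T (y(0:=ee 1, 1:=ee 1, k:=ee 2)))
            (ff d T (y(0:=ee 1, 1:=ee 2, k:=ee 2))) (ff d T (y(0:=ee 2, 1:=ee 2, k:=ee 2))) a b c"
proof -
  let ?G = "\<lambda>a b c. ff d T (y(0:=a, 1:=b, k:=c))"
  have d0: "0 < d" "1 < d" "k \<noteq> 0" "k \<noteq> 1" using k by auto
  have L0: "?G a b c = a 1 * ?G (ee 1) b c + a 2 * ?G (ee 2) b c" for a b c
  proof -
    have e: "y(0:=a', 1:=b, k:=c) = (y(1:=b, k:=c))(0:=a')" for a' using d0 by (auto simp: fun_eq_iff)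
    show ?thesis unfolding e using ff_lin[of 0 d T "y(1:=b, k:=c)" a] d0 by simp
  qed
  have L1: "?G a b c = b 1 * ?G a (ee 1) c + b 2 * ?G a (ee 2) c" for a b c
  proof -
    have e: "y(0:=a, 1:=b', k:=c) = (y(0:=a, k:=c))(1:=b')" for b' using d0 by (auto simp: fun_eq_iff)
    show ?thesis unfolding e using ff_lin[of 1 d T "y(0:=a, k:=c)" b] d0 by simp
  qed
  have L2: "?G a b c = c 1 * ?G a b (ee 1) + c 2 * ?G a b (ee 2)" for a b c
    using ff_lin[of k d T "y(0:=a, 1:=b)" c] k by simp
  have S01: "?G a b c = ?G b a c" for a b c
  proof -
    have e: "y(0:=a', 1:=b', k:=c) = (y(k:=c))(0:=a', 1:=b')" for a' b' using d0 by (auto simp: fun_eq_iff)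
    show ?thesis unfolding e using ff_pair_sym[OF sym, of 0 1 "y(k:=c)" a b] d0 by simp
  qed
  have S0k: "?G a b c = ?G c b a" for a b c
  proof -
    have e: "y(0:=a', 1:=b, k:=c') = (y(1:=b))(0:=a', k:=c')" for a' c' using d0 by (auto simp: fun_eq_iff)
    show ?thesis unfolding e using ff_pair_sym[OF sym, of 0 k "y(1:=b)" a c] d0 k by simp
  qed
  have "?G a b c =
    a 1 * (b 1 * (c 1 * ?G (ee 1) (ee 1) (ee 1) + c 2 * ?G (ee 1) (ee 1) (ee 2)) + b 2 * (c 1 * ?G (ee 1) (ee 2) (ee 1) + c 2 * ?G (ee 1) (ee 2) (ee 2)))
  + a 2 * (b 1 * (c 1 * ?G (ee 2) (ee 1) (ee 1) + c 2 * ?G (ee 2) (ee 1) (ee 2)) + b 2 * (c 1 * ?G (ee 2) (ee 2) (ee 1) + c 2 * ?G (ee 2) (ee 2) (ee 2)))"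
    using L0[of a b c] L1[of "ee 1" b c] L1[of "ee 2" b c] L2[of "ee 1" "ee 1" c] L2[of "ee 1" "ee 2" c]
      L2[of "ee 2" "ee 1" c] L2[of "ee 2" "ee 2" c] by simp
  moreover have "?G (ee 1) (ee 2) (ee 1) = ?G (ee 1) (ee 1) (ee 2)"
    using S01[of "ee 1" "ee 2" "ee 1"] S0k[of "ee 2" "ee 1" "ee 1"] by simp
  moreover have "?G (ee 2) (ee 1) (ee 1) = ?G (ee 1) (ee 1) (ee 2)"
    using S0k[of "ee 2" "ee 1" "ee 1"] by simp
  moreover have "?G (ee 2) (ee 1) (ee 2) = ?G (ee 1) (ee 2) (ee 2)"
    using S01[of "ee 2" "ee 1" "ee 2"] by simp
  moreover have "?G (ee 2) (ee 2) (ee 1) = ?G (ee 1) (ee 2) (ee 2)"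
    using S0k[of "ee 2" "ee 2" "ee 1"] by simp
  ultimately show ?thesis by (simp add: tri_def algebra_simps)
qed

lemma norm_rank1:
  assumes "\<forall>k<d. on_S1 (y k)"
  shows "(\<Sum>ks\<in>idx d. (rank_one d s y ks)\<^sup>2) = s\<^sup>2"
proof -
  have "(\<Sum>ks\<in>idx d. (rank_one d s y ks)\<^sup>2) = s\<^sup>2 * (\<Sum>ks\<in>idx d. \<Prod>k<d. (y k (ks!k))\<^sup>2)"
    by (simp add: rank_one_def power_mult_distrib prod_power_distrib sum_distrib_left)
  also have "(\<Sum>ks\<in>idx d. \<Prod>k<d. (y k (ks!k))\<^sup>2) = (\<Prod>k<d. ((y k 1)\<^sup>2 + (y k 2)\<^sup>2))"
    by (rule sum_prod_idx)
  also have "\<dots> = 1" using assms by (intro prod.neutral) (auto simp: on_S1_def)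
  finally show ?thesis by simp
qed

lemma Qexp:
  assumes "\<forall>k<d. on_S1 (y k)"
  shows "(\<Sum>ks\<in>idx d. (T ks - rank_one d s y ks)\<^sup>2) = (\<Sum>ks\<in>idx d. (T ks)\<^sup>2) - 2 * s * ff d T y + s\<^sup>2"
proof -
  have "(\<Sum>ks\<in>idx d. (T ks - rank_one d s y ks)\<^sup>2) =
     (\<Sum>ks\<in>idx d. (T ks)\<^sup>2) - 2 * (\<Sum>ks\<in>idx d. T ks * rank_one d s y ks) + (\<Sum>ks\<in>idx d. (rank_one d s y ks)\<^sup>2)"
    by (simp add: power2_diff sum.distrib sum_subtractf sum_distrib_left mult.assoc)
  also have "(\<Sum>ks\<in>idx d. T ks * rank_one d s y ks) = s * ff d T y"
    by (simp add: ff_def rank_one_def sum_distrib_left algebra_simps)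
  finally show ?thesis using norm_rank1[OF assms] by simp
qed

lemma par_sym:
  assumes d: "0 < d" and u: "\<forall>k<d. on_S1 (x k)" and c: "\<forall>j<d. cross (x 0) (x j) = 0"
  shows "sym_tensor d (rank_one d a x)"
proof -
  define l where "l k = x 0 1 * x k 1 + x 0 2 * x k 2" for k
  have comp: "x k t = l k * x 0 t" if "k < d" "t \<in> {1,2}" for k t
  proof -
    have u0: "(x 0 1)\<^sup>2 + (x 0 2)\<^sup>2 = 1" using u d by (simp add: on_S1_def)
    have c0: "cross (x 0) (x k) = 0" using c that by simp
    have "l k * x 0 1 - x k 1 = x 0 2 * cross (x 0) (x k) + ((x 0 1)\<^sup>2 + (x 0 2)\<^sup>2 - 1) * x k 1"
      unfolding l_def cross_def by (simp add: power2_eq_square algebra_simps)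
    moreover have "l k * x 0 2 - x k 2 = - x 0 1 * cross (x 0) (x k) + ((x 0 1)\<^sup>2 + (x 0 2)\<^sup>2 - 1) * x k 2"
      unfolding l_def cross_def by (simp add: power2_eq_square algebra_simps)
    ultimately show ?thesis using that u0 c0 by auto
  qed
  have key: "(\<Prod>k<d. x k (ls!k)) = (\<Prod>k<d. l k) * prod_mset (image_mset (x 0) (mset ls))"
    if "ls \<in> idx d" for ls
  proof -
    have len: "length ls = d" using that by (simp add: idx_def)
    have "(\<Prod>k<d. x k (ls!k)) = (\<Prod>k<d. l k * x 0 (ls!k))"
      by (intro prod.cong refl) (metis comp idx_nth[OF that] lessThan_iff)
    also have "\<dots> = (\<Prod>k<d. l k) * (\<Prod>k<d. x 0 (ls!k))" by (simp add: prod.distrib)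
    also have "(\<Prod>k<d. x 0 (ls!k)) = prod_list (map (x 0) ls)"
      using len by (simp add: prod.list_conv_set_nth atLeast0LessThan)
    also have "\<dots> = prod_mset (image_mset (x 0) (mset ls))"
      by (simp add: prod_mset_prod_list[symmetric])
    finally show ?thesis .
  qed
  show ?thesis unfolding sym_tensor_def
  proof (intro ballI allI impI)
    fix ks js assume ks: "ks \<in> idx d" and m: "mset js = mset ks"
    have l: "length js = length ks" using m by (rule mset_eq_length)
    have st: "set js = set ks" using m by (metis set_mset_mset)
    have "js \<in> idx d" using ks l st unfolding idx_def by simp
    then show "rank_one d a x js = rank_one d a x ks"
      unfolding rank_one_def using key[OF ks] key[OF \<open>js \<in> idx d\<close>] m by simp
  qed
qed

theorem lemma5p1:
  fixes d :: nat and T :: "nat list \<Rightarrow> real"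
  assumes "d \<ge> 2"
    and "sym_tensor d T"
    and "\<exists>is\<in>idx d. T is \<noteq> 0"
    and "\<exists>a x. best_rank_one_approx d T a x \<and> \<not> sym_tensor d (rank_one d a x)"
  shows "\<forall>rest\<in>idx (d - 2). T (1 # 1 # rest) + T (2 # 2 # rest) = 0"
proof -
  from assms(4) obtain a x where best: "best_rank_one_approx d T a x"
    and ns: "\<not> sym_tensor d (rank_one d a x)" by blast
  have ux: "\<forall>k<d. on_S1 (x k)" using best unfolding best_rank_one_approx_def by blast
  define N where "N = (\<Sum>ks\<in>idx d. (T ks)\<^sup>2)"
  have tn: "tnorm d (\<lambda>ks. T ks - rank_one d s y ks) = sqrt (N - 2*s*ff d T y + s\<^sup>2)"
    if "\<forall>k<d. on_S1 (y k)" for s y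
    unfolding tnorm_def N_def using Qexp[OF that] by simp
  have opt: "N - 2*a*ff d T x + a\<^sup>2 \<le> N - 2*s*ff d T y + s\<^sup>2"
    if "\<forall>k<d. on_S1 (y k)" for s y
  proof -
    have "tnorm d (\<lambda>ks. T ks - rank_one d a x ks) \<le> tnorm d (\<lambda>ks. T ks - rank_one d s y ks)"
      using best that unfolding best_rank_one_approx_def by blast
    then show ?thesis using tn[OF that] tn[OF ux] by simp
  qed
  define s0 where "s0 = ff d T x"
  have "(a - s0)\<^sup>2 \<le> 0" using opt[where s=s0 and y=x, OF ux] unfolding s0_def
    by (simp add: power2_eq_square algebra_simps)
  then have "(a - s0)\<^sup>2 = 0" by (metis order_antisym zero_le_power2)
  then have as0: "a = s0" by simp
  have bnd: "\<bar>ff d T y\<bar> \<le> \<bar>s0\<bar>" if "\<forall>k<d. on_S1 (y k)" for y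
  proof -
    have "(ff d T y)\<^sup>2 \<le> s0\<^sup>2" using opt[where s="ff d T y" and y=y, OF that] as0
      unfolding s0_def by (simp add: power2_eq_square algebra_simps)
    then have "sqrt ((ff d T y)\<^sup>2) \<le> sqrt (s0\<^sup>2)" by (rule real_sqrt_le_mono)
    then show ?thesis by simp
  qed
  have s0nz: "s0 \<noteq> 0"
  proof
    assume "s0 = 0"
    then have "rank_one d a x = (\<lambda>_. 0)" using as0 by (simp add: rank_one_def fun_eq_iff)
    then show False using ns by (simp add: sym_tensor_def)
  qed
  have d0: "0 < d" "1 < d" using assms(1) by auto
  obtain j where j: "j < d" "cross (x 0) (x j) \<noteq> 0" using par_sym[OF d0(1) ux] ns by blast
  have j0: "j \<noteq> 0"
  proof
    assume "j = 0"
    then show False using j(2) by (simp add: cross_def)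
  qed
  define y0 where "y0 = x \<circ> transpose 1 j"
  have y00: "y0 0 = x 0" "y0 1 = x j" using j0 by (auto simp: y0_def transpose_def)
  have uy0: "\<forall>k<d. on_S1 (y0 k)" using ux j(1) d0 by (auto simp: y0_def transpose_def)
  have fy0: "ff d T y0 = s0" unfolding y0_def s0_def using ff_swap[OF assms(2) d0(2) j(1)] by simp
  define Good where "Good y \<longleftrightarrow> (\<exists>u v. on_S1 u \<and> on_S1 v \<and> cross u v \<noteq> 0 \<and> ff d T (y(0:=u, 1:=v)) = s0)" for y
  have G0: "Good y0"
  proof -
    have "y0(0:=x 0, 1:=x j) = y0" using y00 by (auto simp: fun_eq_iff)
    then show ?thesis unfolding Good_def using ux d0 j fy0 by metis
  qed
  have Gcong: "Good y'" if GG: "Good y" "\<forall>k. 2 \<le> k \<and> k < d \<longrightarrow> y k = y' k" for y y'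
  proof -
    obtain u v where uv: "on_S1 u" "on_S1 v" "cross u v \<noteq> 0" "ff d T (y(0:=u,1:=v)) = s0"
      using GG(1) unfolding Good_def by blast
    have "ff d T (y'(0:=u,1:=v)) = ff d T (y(0:=u,1:=v))" using GG(2) by (intro ff_cong) auto
    then show ?thesis unfolding Good_def using uv by metis
  qed
  have step: "Good (y(k:=w))"
    if GS: "Good y" "\<forall>j. 2 \<le> j \<and> j < d \<longrightarrow> on_S1 (y j)" "2 \<le> k" "k < d" "on_S1 w" for y k w
  proof -
    obtain u0 v0 where uv: "on_S1 u0" "on_S1 v0" "cross u0 v0 \<noteq> 0" "ff d T (y(0:=u0,1:=v0)) = s0"
      using GS(1) unfolding Good_def by blast
    define F1 where "F1 = ff d T (y(0:=ee 1, 1:=ee 1, k:=ee 1))"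
    define F2 where "F2 = ff d T (y(0:=ee 1, 1:=ee 1, k:=ee 2))"
    define F3 where "F3 = ff d T (y(0:=ee 1, 1:=ee 2, k:=ee 2))"
    define F4 where "F4 = ff d T (y(0:=ee 2, 1:=ee 2, k:=ee 2))"
    have E: "ff d T (y(0:=a,1:=b,k:=c)) = tri F1 F2 F3 F4 a b c" for a b c
      unfolding F1_def F2_def F3_def F4_def by (rule ff3[OF assms(2) that(3,4)])
    have "\<exists>u v. on_S1 u \<and> on_S1 v \<and> cross u v \<noteq> 0 \<and> tri F1 F2 F3 F4 u v w = s0"
    proof (rule triS[OF _ uv(1,2) _ uv(3) _ s0nz that(5)])
      show "\<forall>a b c. on_S1 a \<longrightarrow> on_S1 b \<longrightarrow> on_S1 c \<longrightarrow> \<bar>tri F1 F2 F3 F4 a b c\<bar> \<le> \<bar>s0\<bar>"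
      proof (intro allI impI)
        fix a b c assume abc: "on_S1 a" "on_S1 b" "on_S1 c"
        have "\<forall>i<d. on_S1 ((y(0:=a,1:=b,k:=c)) i)"
        proof (intro allI impI)
          fix i assume "i < d"
          have k2: "2 \<le> k" by (rule that(3))
          consider "i = k" | "i = 0" | "i = 1" | "2 \<le> i" "i \<noteq> k" by arith
          then show "on_S1 ((y(0:=a,1:=b,k:=c)) i)"
          proof cases
            case 1 then show ?thesis using abc by simp
          next
            case 2 then show ?thesis using abc k2 by simp
          next
            case 3 then show ?thesis using abc k2 by simp
          next
            case 4 then show ?thesis using GS(2) \<open>i < d\<close> by simp
          qed
        qed
        then show "\<bar>tri F1 F2 F3 F4 a b c\<bar> \<le> \<bar>s0\<bar>" using bnd E by metis
      qed
      show "on_S1 (y k)" using that by auto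
      have "y(0:=u0,1:=v0,k:=y k) = y(0:=u0,1:=v0)" using that(3) by (auto simp: fun_eq_iff)
      then show "tri F1 F2 F3 F4 u0 v0 (y k) = s0" using E[of u0 v0 "y k"] uv(4) by simp
    qed
    then obtain u v where uv': "on_S1 u" "on_S1 v" "cross u v \<noteq> 0" "tri F1 F2 F3 F4 u v w = s0" by blast
    have "(y(k:=w))(0:=u,1:=v) = y(0:=u,1:=v,k:=w)" using that(3) by (auto simp: fun_eq_iff)
    then have "ff d T ((y(k:=w))(0:=u,1:=v)) = s0" using E[of u v w] uv'(4) by simp
    then show ?thesis unfolding Good_def using uv' by metis
  qed
  have allG: "Good z" if zu: "\<forall>j. 2 \<le> j \<and> j < d \<longrightarrow> on_S1 (z j)" for z
  proof -
    define W where "W n = (\<lambda>j. if 2 \<le> j \<and> j < 2 + n then z j else y0 j)" for n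
    have "Good (W n)" for n
    proof (induction n)
      case 0
      have "W 0 = y0" by (simp add: W_def fun_eq_iff)
      then show ?case using G0 by simp
    next
      case (Suc n)
      show ?case
      proof (cases "2 + n < d")
        case True
        have e: "W (Suc n) = (W n)(2+n := z (2+n))" by (auto simp: W_def fun_eq_iff)
        have u: "\<forall>j. 2 \<le> j \<and> j < d \<longrightarrow> on_S1 (W n j)" using zu uy0 by (auto simp: W_def)
        have "on_S1 (z (2+n))" using zu True by auto
        then show ?thesis unfolding e by (rule step[OF Suc.IH u le_add1 True])
      next
        case False
        have "\<forall>j. 2 \<le> j \<and> j < d \<longrightarrow> W n j = W (Suc n) j" using False by (auto simp: W_def)
        then show ?thesis using Gcong Suc.IH by blast
      qed
    qed
    moreover have "\<forall>j. 2 \<le> j \<and> j < d \<longrightarrow> W d j = z j" by (auto simp: W_def)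
    ultimately show ?thesis using Gcong by blast
  qed
  show ?thesis
  proof
    fix rest assume r: "rest \<in> idx (d - 2)"
    define z where "z = (\<lambda>k. ee ((1#1#rest)!k))"
    have uz: "\<forall>j. 2 \<le> j \<and> j < d \<longrightarrow> on_S1 (z j)"
    proof (intro allI impI)
      fix j assume jj: "2 \<le> j \<and> j < d"
      have "j = Suc (Suc (j - 2))" using jj by arith
      then obtain i where ji: "j = Suc (Suc i)" by blast
      then have "i < d - 2" using jj by simp
      then have "rest ! i \<in> {1,2}" by (rule idx_nth[OF r])
      then show "on_S1 (z j)" unfolding z_def ji by (auto simp: ee_def on_S1_def)
    qed
    obtain u v where uv: "on_S1 u" "on_S1 v" "cross u v \<noteq> 0" "ff d T (z(0:=u,1:=v)) = s0"
      using allG[OF uz] unfolding Good_def by blast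
    define H where "H a b = ff d T (z(0:=ee a, 1:=ee b))" for a b
    have zb: "z(0:=ee a, 1:=ee b) = (\<lambda>k. ee ((a#b#rest)!k))" for a b
      unfolding z_def by (auto simp: fun_eq_iff nth_Cons split: nat.split)
    have HT: "H a b = T (a#b#rest)" if "a \<in> {1,2}" "b \<in> {1,2}" for a b
    proof -
      have "(a#b#rest) \<in> idx d" using r that assms(1) by (auto simp: idx_def)
      then show ?thesis unfolding H_def zb by (rule ff_basis)
    qed
    have bilE: "ff d T (z(0:=u',1:=v')) = bil (H 1 1) (H 1 2) (H 2 2) u' v'" for u' v'
      unfolding H_def by (rule ff2[OF assms(2) d0(2)])
    have "H 1 1 + H 2 2 = 0 \<and> (H 1 1)\<^sup>2 + (H 1 2)\<^sup>2 = s0\<^sup>2"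
    proof (rule pairP[OF _ uv(1,2,3) _ order_refl s0nz])
      show "\<forall>u v. on_S1 u \<longrightarrow> on_S1 v \<longrightarrow> \<bar>bil (H 1 1) (H 1 2) (H 2 2) u v\<bar> \<le> \<bar>s0\<bar>"
      proof (intro allI impI)
        fix u' v' assume uv': "on_S1 u'" "on_S1 v'"
        have "\<forall>i<d. on_S1 ((z(0:=u',1:=v')) i)"
        proof (intro allI impI)
          fix i assume "i < d"
          consider "i = 0" | "i = 1" | "2 \<le> i" by arith
          then show "on_S1 ((z(0:=u',1:=v')) i)"
          proof cases
            case 1 then show ?thesis using uv' by simp
          next
            case 2 then show ?thesis using uv' by simp
          next
            case 3 then show ?thesis using uz \<open>i < d\<close> by simp
          qed
        qed
        then show "\<bar>bil (H 1 1) (H 1 2) (H 2 2) u' v'\<bar> \<le> \<bar>s0\<bar>" using bnd bilE by metis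
      qed
      show "bil (H 1 1) (H 1 2) (H 2 2) u v = s0" using uv(4) bilE by simp
    qed
    then show "T (1#1#rest) + T (2#2#rest) = 0" using HT by simp
  qed
qed

end
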